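(* Let $X$ be a subspace of $\beta\omega$ with $\omega\subseteq X$. If $\operatorname{CL}(X)$ is pseudocompact, then $X^\kappa$ is pseudocompact for every cardinal $\kappa$.
   Context: $\beta\omega$ is the Stone–Čech compactification of the discrete space $\omega$. Powers carry the product topology. $\operatorname{CL}(X)$ is the set of nonempty closed subsets of $X$ with the Vietoris topology; pseudocompact means every continuous real-valued function is bounded. *)

theory Defs
  imports "HOL-Analysis.Analysis"
begin

definition nat_ultrafilter :: "nat set set \<Rightarrow> bool" where
  "nat_ultrafilter U \<longleftrightarrow>
     UNIV \<in> U \<and> {} \<notin> U \<and>
     (\<forall>A B. A \<in> U \<and> A \<subseteq> B \<longrightarrow> B \<in> U) \<and>
     (\<forall>A B. A \<in> U \<and> B \<in> U \<longrightarrow> A \<inter> B \<in> U) \<and>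
     (\<forall>A. A \<in> U \<or> - A \<in> U)"

text \<open>The Stone-Cech compactification \<beta>\<omega> of the discrete space \<omega>, realised in
  the standard way as the space of ultrafilters on \<omega> with the Stone topology whose
  basic open sets are the sets of ultrafilters containing a fixed A \<subseteq> \<omega>.\<close>
definition beta_omega :: "nat set set topology" where
  "beta_omega = topology_generated_by
     ((\<lambda>A. {U. nat_ultrafilter U \<and> A \<in> U}) ` UNIV)"

text \<open>The canonical copy of \<omega> in \<beta>\<omega>: principal ultrafilters.\<close>
definition principal_uf :: "nat \<Rightarrow> nat set set" where
  "principal_uf n = {A. n \<in> A}"

definition pseudocompact :: "'a topology \<Rightarrow> bool" where
  "pseudocompact T \<longleftrightarrow>
     (\<forall>f. continuous_map T euclideanreal f \<longrightarrow> bounded (f ` topspace T))"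

definition CL :: "'a topology \<Rightarrow> 'a set set" where
  "CL T = {A. closedin T A \<and> A \<noteq> {}}"

definition vietoris :: "'a topology \<Rightarrow> 'a set topology" where
  "vietoris T = topology_generated_by
     ((\<lambda>U. {A \<in> CL T. A \<subseteq> U}) ` {U. openin T U} \<union>
      (\<lambda>U. {A \<in> CL T. A \<inter> U \<noteq> {}}) ` {U. openin T U})"

end

theory Submission
  imports Defs
begin

definition bo :: "nat set \<Rightarrow> nat set set set" where
  "bo A = {U. nat_ultrafilter U \<and> A \<in> U}"

lemma topspace_bo: "topspace beta_omega = {U. nat_ultrafilter U}"
  unfolding beta_omega_def topology_generated_by_topspace
proof (intro equalityI subsetI)
  fix x assume "x \<in> \<Union> ((\<lambda>A. {U. nat_ultrafilter U \<and> A \<in> U}) ` UNIV)"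
  then show "x \<in> {U. nat_ultrafilter U}" by blast
next
  fix x assume "x \<in> {U. nat_ultrafilter U}"
  then have "x \<in> {U. nat_ultrafilter U \<and> UNIV \<in> U}" by (simp add: nat_ultrafilter_def)
  then show "x \<in> \<Union> ((\<lambda>A. {U. nat_ultrafilter U \<and> A \<in> U}) ` UNIV)" by blast
qed

lemma open_bo: "openin beta_omega (bo A)"
  unfolding beta_omega_def bo_def by (rule topology_generated_by_Basis) auto

lemma uf_empty: "nat_ultrafilter U \<Longrightarrow> {} \<notin> U"
  by (simp add: nat_ultrafilter_def)
lemma uf_Int: "nat_ultrafilter U \<Longrightarrow> A \<in> U \<Longrightarrow> B \<in> U \<Longrightarrow> A \<inter> B \<in> U"
  by (simp add: nat_ultrafilter_def)
lemma uf_mono: "nat_ultrafilter U \<Longrightarrow> A \<in> U \<Longrightarrow> A \<subseteq> B \<Longrightarrow> B \<in> U"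
  by (simp add: nat_ultrafilter_def)
lemma uf_compl: assumes "nat_ultrafilter U" shows "(- A \<in> U) \<longleftrightarrow> A \<notin> U"
proof
  assume c: "- A \<in> U"
  note u = assms
  show "A \<notin> U"
  proof
    assume "A \<in> U"
    then have "- A \<inter> A \<in> U" using u c uf_Int by blast
    moreover have "- A \<inter> A = {}" by auto
    ultimately show False using u uf_empty by metis
  qed
next
  assume "A \<notin> U"
  then show "- A \<in> U" using assms unfolding nat_ultrafilter_def by blast
qed

lemma uf_pu: "nat_ultrafilter (principal_uf n)"
  unfolding nat_ultrafilter_def principal_uf_def by blast

lemma pu_in_bo: "principal_uf n \<in> bo A \<longleftrightarrow> n \<in> A"
  using uf_pu[of n] unfolding bo_def principal_uf_def by blast

lemma pu_inj: "principal_uf a = principal_uf b \<Longrightarrow> a = b"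
  unfolding principal_uf_def by (metis mem_Collect_eq singletonD singletonI)

lemma uf_finite: "finite E \<Longrightarrow> nat_ultrafilter U \<Longrightarrow> E \<in> U \<Longrightarrow> \<exists>e\<in>E. {e} \<in> U"
proof (induction E rule: finite_induct)
  case empty then show ?case by (simp add: uf_empty)
next
  case (insert a F)
  show ?case
  proof (cases "{a} \<in> U")
    case True then show ?thesis by auto
  next
    case False
    then have "- {a} \<in> U" using insert uf_compl by blast
    then have "insert a F \<inter> - {a} \<in> U" using insert uf_Int by blast
    moreover have "insert a F \<inter> - {a} \<subseteq> F" by auto
    ultimately have "F \<in> U" using insert.prems uf_mono by blast
    then show ?thesis using insert by auto
  qed
qed

lemma uf_single: "nat_ultrafilter U \<Longrightarrow> {e} \<in> U \<Longrightarrow> U = principal_uf e"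
  unfolding principal_uf_def
proof (safe)
  fix B assume u: "nat_ultrafilter U" "{e} \<in> U"
  { assume b: "B \<in> U" show "e \<in> B"
    proof (rule ccontr)
      assume "e \<notin> B"
      then have "{e} \<inter> B = {}" by auto
      then show False using uf_Int[OF u(1) u(2) b] uf_empty[OF u(1)] by simp
    qed }
  { assume "e \<in> B" then show "B \<in> U" using u uf_mono by blast }
qed

lemma bo_finite: assumes f: "finite E" shows "bo E = principal_uf ` E"
proof
  show "bo E \<subseteq> principal_uf ` E"
  proof
    fix U assume "U \<in> bo E"
    then have u: "nat_ultrafilter U" "E \<in> U" by (auto simp: bo_def)
    then obtain e where "e \<in> E" "{e} \<in> U" using uf_finite[OF f] by blast
    then show "U \<in> principal_uf ` E" using uf_single[OF u(1)] by blast
  qed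
  show "principal_uf ` E \<subseteq> bo E"
    using pu_in_bo by blast
qed

lemma bo_Int: "bo (A \<inter> B) = bo A \<inter> bo B"
proof (intro equalityI subsetI)
  fix U assume "U \<in> bo (A \<inter> B)"
  then have "nat_ultrafilter U" "A \<inter> B \<in> U" by (auto simp: bo_def)
  then have "A \<in> U" "B \<in> U" using uf_mono[of U "A \<inter> B"] by auto
  then show "U \<in> bo A \<inter> bo B" using \<open>nat_ultrafilter U\<close> by (simp add: bo_def)
next
  fix U assume "U \<in> bo A \<inter> bo B"
  then show "U \<in> bo (A \<inter> B)" using uf_Int by (simp add: bo_def)
qed

lemma open_nbhd:
  assumes "openin beta_omega V" "x \<in> V"
  shows "\<exists>A\<in>x. bo A \<subseteq> V"
proof -
  have g: "generate_topology_on ((\<lambda>A. {U. nat_ultrafilter U \<and> A \<in> U}) ` UNIV) V"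
    using assms(1) unfolding beta_omega_def by (simp add: openin_topology_generated_by_iff)
  have "\<forall>x\<in>V. nat_ultrafilter x \<longrightarrow> (\<exists>A\<in>x. bo A \<subseteq> V)"
    using g
  proof induction
    case Empty then show ?case by simp
  next
    case (Int a b)
    show ?case
    proof (intro ballI impI)
      fix x assume "x \<in> a \<inter> b" "nat_ultrafilter x"
      then obtain A B where "A \<in> x" "bo A \<subseteq> a" "B \<in> x" "bo B \<subseteq> b" using Int by blast
      then show "\<exists>C\<in>x. bo C \<subseteq> a \<inter> b"
      proof (intro bexI[of _ "A \<inter> B"])
        show "bo (A \<inter> B) \<subseteq> a \<inter> b" using \<open>bo A \<subseteq> a\<close> \<open>bo B \<subseteq> b\<close> bo_Int by blast
        show "A \<inter> B \<in> x" using uf_Int \<open>nat_ultrafilter x\<close> \<open>A \<in> x\<close> \<open>B \<in> x\<close> by blast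
      qed
    qed
  next
    case (UN K) then show ?case by blast
  next
    case (Basis s)
    then obtain A where "s = {U. nat_ultrafilter U \<and> A \<in> U}" by blast
    then show ?case unfolding bo_def by blast
  qed
  moreover have "x \<in> topspace beta_omega"
    using assms(1) assms(2) openin_subset by blast
  then have "nat_ultrafilter x" by (simp add: topspace_bo)
  ultimately show ?thesis using assms(2) by blast
qed

lemma open_sub_nbhd:
  assumes "openin (subtopology beta_omega X) W" "x \<in> W"
  shows "\<exists>A\<in>x. bo A \<inter> X \<subseteq> W"
proof -
  obtain T where T: "openin beta_omega T" "W = T \<inter> X" using assms(1) unfolding openin_subtopology by auto
  then obtain A where "A \<in> x" "bo A \<subseteq> T" using open_nbhd assms(2) by blast
  then show ?thesis using T by blast
qed

lemma open_sub_bo: "openin (subtopology beta_omega X) (bo A \<inter> X)"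
  unfolding openin_subtopology by (rule exI[of _ "bo A"]) (simp add: open_bo)

definition fto :: "(nat \<Rightarrow> nat) \<Rightarrow> nat set \<Rightarrow> bool" where
  "fto f Q \<longleftrightarrow> (\<forall>v. finite {x\<in>Q. f x = v})"
definition good :: "(nat \<Rightarrow> nat) \<Rightarrow> nat set \<Rightarrow> bool" where
  "good f Q \<longleftrightarrow> (\<exists>c. \<forall>x\<in>Q. f x = c) \<or> fto f Q"

lemma fto_mono: "fto f Q \<Longrightarrow> Q' \<subseteq> Q \<Longrightarrow> fto f Q'"
proof -
  assume a: "fto f Q" "Q' \<subseteq> Q"
  show "fto f Q'" unfolding fto_def
  proof
    fix v
    have "{x\<in>Q'. f x = v} \<subseteq> {x\<in>Q. f x = v}" using a(2) by auto
    moreover have "finite {x\<in>Q. f x = v}" using a(1) by (simp add: fto_def)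
    ultimately show "finite {x\<in>Q'. f x = v}" by (rule finite_subset)
  qed
qed

lemma good_mono: assumes "good f Q" "Q' \<subseteq> Q" shows "good f Q'"
proof (cases "fto f Q")
  case True then show ?thesis using fto_mono assms(2) unfolding good_def by blast
next
  case False
  then obtain c where "\<forall>x\<in>Q. f x = c" using assms(1) unfolding good_def by blast
  then have "\<forall>x\<in>Q'. f x = c" using assms(2) by blast
  then show ?thesis unfolding good_def by blast
qed

lemma refine1: assumes "infinite Q" shows "\<exists>Q'\<subseteq>Q. infinite Q' \<and> good f Q'"
proof (cases "\<exists>v. infinite {x\<in>Q. f x = v}")
  case True
  then obtain v where v: "infinite {x\<in>Q. f x = v}" by blast
  have "\<forall>x\<in>{x\<in>Q. f x = v}. f x = v" by simp
  then have "good f {x\<in>Q. f x = v}" unfolding good_def by blast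
  moreover have "{x\<in>Q. f x = v} \<subseteq> Q" by blast
  ultimately show ?thesis using v by (intro exI[of _ "{x\<in>Q. f x = v}"]) simp
next
  case False
  then have "fto f Q" unfolding fto_def by blast
  then have "good f Q" unfolding good_def by blast
  then show ?thesis using assms by (intro exI[of _ Q]) simp
qed

lemma refine: assumes "finite S" shows "infinite Q \<Longrightarrow> \<exists>Q'\<subseteq>Q. infinite Q' \<and> (\<forall>i\<in>S. good (g i) Q')"
  using assms
proof (induction S arbitrary: Q rule: finite_induct)
  case empty then show ?case by (intro exI[of _ Q]) simp
next
  case (insert a F)
  obtain Q1 where q1: "Q1 \<subseteq> Q" "infinite Q1" "\<forall>i\<in>F. good (g i) Q1" using insert.IH insert.prems by meson
  obtain Q2 where q2: "Q2 \<subseteq> Q1" "infinite Q2" "good (g a) Q2" using refine1[OF q1(2), of "g a"] by meson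
  have "\<forall>i\<in>F. good (g i) Q2" using q1(3) q2(1) good_mono by blast
  then have "\<forall>i\<in>insert a F. good (g i) Q2" using q2(3) by blast
  moreover have "Q2 \<subseteq> Q" using q1(1) q2(1) by blast
  ultimately show ?case using q2(2) by (intro exI[of _ Q2]) simp
qed

definition refQ :: "('i \<Rightarrow> nat \<Rightarrow> nat) \<Rightarrow> nat set \<Rightarrow> 'i set \<Rightarrow> nat set" where
  "refQ g Q S = (SOME Q'. Q' \<subseteq> Q \<and> infinite Q' \<and> (\<forall>i\<in>S. good (g i) Q'))"

lemma refQ: assumes "finite S" "infinite Q"
  shows "refQ g Q S \<subseteq> Q \<and> infinite (refQ g Q S) \<and> (\<forall>i\<in>S. good (g i) (refQ g Q S))"
proof -
  obtain Q' where "Q' \<subseteq> Q" "infinite Q'" "\<forall>i\<in>S. good (g i) Q'" using refine[OF assms(1) assms(2), of g] by meson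
  then have "\<exists>Q'. Q' \<subseteq> Q \<and> infinite Q' \<and> (\<forall>i\<in>S. good (g i) Q')" by (intro exI[of _ Q']) simp
  then show ?thesis unfolding refQ_def by (rule someI_ex)
qed

primrec Qs :: "('i \<Rightarrow> nat \<Rightarrow> nat) \<Rightarrow> (nat \<Rightarrow> 'i set) \<Rightarrow> nat \<Rightarrow> nat set" where
  "Qs g Js 0 = refQ g UNIV (Js 0)"
| "Qs g Js (Suc k) = refQ g (Qs g Js k) (Js (Suc k))"

lemma Qs_props:
  assumes fin: "\<And>k. finite (Js k)"
  shows "infinite (Qs g Js k) \<and> (\<forall>i\<in>Js k. good (g i) (Qs g Js k)) \<and> Qs g Js (Suc k) \<subseteq> Qs g Js k"
proof (induction k)
  case 0
  have a: "infinite (Qs g Js 0) \<and> (\<forall>i\<in>Js 0. good (g i) (Qs g Js 0))"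
    using refQ[OF fin[of 0], of UNIV g] by simp
  then show ?case using refQ[OF fin[of 1], of "Qs g Js 0" g] by simp
next
  case (Suc k)
  have a: "infinite (Qs g Js (Suc k)) \<and> (\<forall>i\<in>Js (Suc k). good (g i) (Qs g Js (Suc k)))"
    using refQ[OF fin[of "Suc k"], of "Qs g Js k" g] Suc by simp
  then show ?case using refQ[OF fin[of "Suc (Suc k)"], of "Qs g Js (Suc k)" g] by simp
qed

lemma Qs_anti:
  assumes fin: "\<And>k. finite (Js k)" and "k \<le> k'"
  shows "Qs g Js k' \<subseteq> Qs g Js k"
proof -
  have "\<And>n. Qs g Js (Suc n) \<subseteq> Qs g Js n" using Qs_props[of Js g, OF fin] by blast
  then show ?thesis using lift_Suc_antimono_le[of "Qs g Js", OF _ assms(2)] by blast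
qed

definition Vals :: "('i \<Rightarrow> nat \<Rightarrow> nat) \<Rightarrow> (nat \<Rightarrow> 'i set) \<Rightarrow> nat \<Rightarrow> nat \<Rightarrow> nat set" where
  "Vals g Js k x = insert x ((\<lambda>i. g i x) ` {i\<in>Js k. fto (g i) (Qs g Js k)})"

definition avoid :: "('i \<Rightarrow> nat \<Rightarrow> nat) \<Rightarrow> (nat \<Rightarrow> 'i set) \<Rightarrow> nat set \<Rightarrow> nat \<Rightarrow> nat" where
  "avoid g Js P k = (SOME x. x \<in> Qs g Js k \<and> k \<le> x \<and> x \<notin> P \<and>
      (\<forall>i\<in>Js k. fto (g i) (Qs g Js k) \<longrightarrow> g i x \<notin> P))"

primrec Ps :: "('i \<Rightarrow> nat \<Rightarrow> nat) \<Rightarrow> (nat \<Rightarrow> 'i set) \<Rightarrow> nat \<Rightarrow> nat set" where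
  "Ps g Js 0 = {}"
| "Ps g Js (Suc k) = Ps g Js k \<union> Vals g Js k (avoid g Js (Ps g Js k) k)"

definition ms :: "('i \<Rightarrow> nat \<Rightarrow> nat) \<Rightarrow> (nat \<Rightarrow> 'i set) \<Rightarrow> nat \<Rightarrow> nat" where
  "ms g Js k = avoid g Js (Ps g Js k) k"
definition Es :: "('i \<Rightarrow> nat \<Rightarrow> nat) \<Rightarrow> (nat \<Rightarrow> 'i set) \<Rightarrow> nat \<Rightarrow> nat set" where
  "Es g Js k = Vals g Js k (ms g Js k)"

lemma avoid_spec:
  assumes fin: "\<And>k. finite (Js k)" and P: "finite P"
  shows "avoid g Js P k \<in> Qs g Js k \<and> k \<le> avoid g Js P k \<and> avoid g Js P k \<notin> P \<and>
      (\<forall>i\<in>Js k. fto (g i) (Qs g Js k) \<longrightarrow> g i (avoid g Js P k) \<notin> P)"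
proof -
  define Q where "Q = Qs g Js k"
  define S where "S = {i\<in>Js k. fto (g i) Q}"
  define Bad where "Bad = {..<k} \<union> P \<union> (\<Union>i\<in>S. \<Union>v\<in>P. {x\<in>Q. g i x = v})"
  have "finite S" using fin[of k] by (simp add: S_def)
  moreover have "\<And>i v. i \<in> S \<Longrightarrow> finite {x\<in>Q. g i x = v}" by (simp add: S_def fto_def)
  ultimately have "finite Bad" unfolding Bad_def using P by auto
  moreover have "infinite Q" using Qs_props[of Js g k, OF fin] by (simp add: Q_def)
  ultimately have "infinite (Q - Bad)" using Diff_infinite_finite by blast
  then have "Q - Bad \<noteq> {}" by (rule infinite_imp_nonempty)
  then obtain x where x: "x \<in> Q" "x \<notin> Bad" by blast
  have "x \<in> Qs g Js k \<and> k \<le> x \<and> x \<notin> P \<and> (\<forall>i\<in>Js k. fto (g i) (Qs g Js k) \<longrightarrow> g i x \<notin> P)"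
  proof (intro conjI ballI impI)
    show "x \<in> Qs g Js k" using x by (simp add: Q_def)
    show "k \<le> x" using x by (auto simp: Bad_def)
    show "x \<notin> P" using x by (auto simp: Bad_def)
    fix i assume "i \<in> Js k" "fto (g i) (Qs g Js k)"
    then have "i \<in> S" by (simp add: S_def Q_def)
    then show "g i x \<notin> P" using x unfolding Bad_def by blast
  qed
  then show ?thesis unfolding avoid_def by (rule someI)
qed

lemma Ps_finite: assumes fin: "\<And>k. finite (Js k)" shows "finite (Ps g Js k)"
proof (induction k)
  case 0 then show ?case by simp
next
  case (Suc k)
  have "finite (Vals g Js k x)" for x using fin[of k] by (simp add: Vals_def)
  then show ?case using Suc by simp
qed

lemma ms_spec:
  assumes fin: "\<And>k. finite (Js k)"
  shows "ms g Js k \<in> Qs g Js k \<and> k \<le> ms g Js k \<and> Es g Js k \<inter> Ps g Js k = {}"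
proof -
  have a: "avoid g Js (Ps g Js k) k \<in> Qs g Js k \<and> k \<le> avoid g Js (Ps g Js k) k \<and> avoid g Js (Ps g Js k) k \<notin> Ps g Js k \<and>
      (\<forall>i\<in>Js k. fto (g i) (Qs g Js k) \<longrightarrow> g i (avoid g Js (Ps g Js k) k) \<notin> Ps g Js k)"
    using avoid_spec[where Js=Js and g=g and k=k and P="Ps g Js k", OF fin Ps_finite[where Js=Js and g=g and k=k, OF fin]] by blast
  have "Es g Js k \<inter> Ps g Js k = {}"
    using a unfolding Es_def Vals_def ms_def by auto
  then show ?thesis using a unfolding ms_def by blast
qed

lemma Es_sub_Ps:
  assumes "k' < k" shows "Es g Js k' \<subseteq> Ps g Js k"
proof -
  have "Ps g Js (Suc k') \<subseteq> Ps g Js k"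
    using lift_Suc_mono_le[of "Ps g Js" "Suc k'" k] assms by auto
  moreover have "Es g Js k' \<subseteq> Ps g Js (Suc k')" by (simp add: Es_def ms_def)
  ultimately show ?thesis by blast
qed

lemma Es_disj:
  assumes fin: "\<And>k. finite (Js k)" and "k \<noteq> k'"
  shows "Es g Js k \<inter> Es g Js k' = {}"
proof (cases "k' < k")
  case True
  then show ?thesis using Es_sub_Ps[OF True, where g=g and Js=Js] ms_spec[where Js=Js and g=g and k=k, OF fin] by blast
next
  case False
  then have "k < k'" using assms(2) by simp
  then show ?thesis using Es_sub_Ps[OF \<open>k < k'\<close>, where g=g and Js=Js] ms_spec[where Js=Js and g=g and k=k', OF fin] by blast
qed

lemma Es_finite: assumes fin: "\<And>k. finite (Js k)" shows "finite (Es g Js k)" "Es g Js k \<noteq> {}"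
  using fin[of k] by (auto simp: Es_def Vals_def)

lemma Es_mem:
  assumes "i \<in> Js k" "fto (g i) (Qs g Js k)" shows "g i (ms g Js k) \<in> Es g Js k"
  using assms by (auto simp: Es_def Vals_def)

lemma ts_X: "X \<subseteq> topspace beta_omega \<Longrightarrow> topspace (subtopology beta_omega X) = X"
  by (rule topspace_subtopology_subset)

lemma X_uf: "X \<subseteq> topspace beta_omega \<Longrightarrow> x \<in> X \<Longrightarrow> nat_ultrafilter x"
  using topspace_bo by blast

lemma open_pu:
  assumes "range principal_uf \<subseteq> X" "finite E"
  shows "openin (subtopology beta_omega X) (principal_uf ` E)"
proof -
  have "principal_uf ` E = bo E \<inter> X" using bo_finite[OF assms(2)] assms(1) by blast
  then show ?thesis using open_sub_bo by metis
qed

lemma closed_pu: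
  assumes X: "X \<subseteq> topspace beta_omega" "range principal_uf \<subseteq> X" and f: "finite E"
  shows "closedin (subtopology beta_omega X) (principal_uf ` E)"
proof -
  have eq: "X - principal_uf ` E = bo (- E) \<inter> X"
  proof (intro equalityI subsetI)
    fix x assume x: "x \<in> X - principal_uf ` E"
    then have u: "nat_ultrafilter x" using X_uf[OF X(1)] by blast
    have "E \<notin> x"
    proof
      assume "E \<in> x"
      then have "x \<in> bo E" using u by (simp add: bo_def)
      then show False using x bo_finite[OF f] by blast
    qed
    then have "- E \<in> x" using uf_compl[OF u] by blast
    then show "x \<in> bo (- E) \<inter> X" using x u by (simp add: bo_def)
  next
    fix x assume x: "x \<in> bo (- E) \<inter> X"
    have "x \<notin> principal_uf ` E"
    proof
      assume "x \<in> principal_uf ` E"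
      then obtain e where "e \<in> E" "x = principal_uf e" by blast
      then show False using x pu_in_bo[of e "- E"] by simp
    qed
    then show "x \<in> X - principal_uf ` E" using x by blast
  qed
  have "principal_uf ` E \<subseteq> X" using X(2) by blast
  then show ?thesis unfolding closedin_def ts_X[OF X(1)] using eq open_sub_bo by metis
qed

lemma ts_viet: "topspace (vietoris T) = CL T"
proof -
  have "CL T \<subseteq> {A \<in> CL T. A \<subseteq> topspace T}" unfolding CL_def using closedin_subset by blast
  moreover have "openin T (topspace T)" by simp
  ultimately have "CL T \<subseteq> \<Union> ((\<lambda>U. {A \<in> CL T. A \<subseteq> U}) ` {U. openin T U} \<union>
      (\<lambda>U. {A \<in> CL T. A \<inter> U \<noteq> {}}) ` {U. openin T U})" by blast
  moreover have "\<Union> ((\<lambda>U. {A \<in> CL T. A \<subseteq> U}) ` {U. openin T U} \<union>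
      (\<lambda>U. {A \<in> CL T. A \<inter> U \<noteq> {}}) ` {U. openin T U}) \<subseteq> CL T" by blast
  ultimately show ?thesis unfolding vietoris_def topology_generated_by_topspace by blast
qed

lemma viet_upper: "openin T U \<Longrightarrow> openin (vietoris T) {A \<in> CL T. A \<subseteq> U}"
  unfolding vietoris_def by (rule topology_generated_by_Basis) blast

lemma viet_lower: "openin T U \<Longrightarrow> openin (vietoris T) {A \<in> CL T. A \<inter> U \<noteq> {}}"
  unfolding vietoris_def by (rule topology_generated_by_Basis) blast

lemma sep_lemma:
  assumes C: "C \<in> CL T" and F: "closedin T F" "\<And>y. y \<in> F \<Longrightarrow> closedin T {y}" and ne: "C \<noteq> F"
  shows "\<exists>M. openin (vietoris T) M \<and> C \<in> M \<and> F \<notin> M"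
proof (cases "\<exists>x\<in>C. x \<notin> F")
  case True
  have o: "openin T (topspace T - F)" using F(1) by (simp add: closedin_def)
  have "C \<subseteq> topspace T" using C unfolding CL_def using closedin_subset by blast
  then have "C \<inter> (topspace T - F) \<noteq> {}" using True by blast
  then have "C \<in> {A \<in> CL T. A \<inter> (topspace T - F) \<noteq> {}}" using C by blast
  moreover have "F \<notin> {A \<in> CL T. A \<inter> (topspace T - F) \<noteq> {}}" by blast
  ultimately show ?thesis using viet_lower[OF o] by blast
next
  case False
  then have "C \<subseteq> F" by blast
  then obtain y where y: "y \<in> F" "y \<notin> C" using ne by blast
  have o: "openin T (topspace T - {y})" using F(2)[OF y(1)] by (simp add: closedin_def)
  have "C \<subseteq> topspace T" using C unfolding CL_def using closedin_subset by blast
  then have "C \<in> {A \<in> CL T. A \<subseteq> topspace T - {y}}" using C y by blast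
  moreover have "F \<notin> {A \<in> CL T. A \<subseteq> topspace T - {y}}" using y by blast
  ultimately show ?thesis using viet_upper[OF o] by blast
qed

lemma cluster_lemma:
  fixes X :: "nat set set set" and E :: "nat \<Rightarrow> nat set"
  assumes X: "X \<subseteq> topspace beta_omega" "range principal_uf \<subseteq> X"
    and ps: "pseudocompact (vietoris (subtopology beta_omega X))"
    and Ef: "\<And>k. finite (E k)" and Ene: "\<And>k. E k \<noteq> {}"
    and Ed: "\<And>k k'. k \<noteq> k' \<Longrightarrow> E k \<inter> E k' = {}"
  shows "\<exists>A\<in>CL (subtopology beta_omega X). \<forall>N. openin (vietoris (subtopology beta_omega X)) N \<longrightarrow> A \<in> N \<longrightarrow>
           (\<forall>K. \<exists>k\<ge>K. principal_uf ` E k \<in> N)"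
proof (rule ccontr)
  define T where "T = subtopology beta_omega X"
  define V where "V = vietoris T"
  define EE where "EE = (\<lambda>k. principal_uf ` E k)"
  assume neg: "\<not> ?thesis"
  have H: "\<exists>N. openin V N \<and> A \<in> N \<and> (\<exists>K. \<forall>k\<ge>K. EE k \<notin> N)" if A: "A \<in> CL T" for A
  proof -
    have "\<not> (\<forall>N. openin V N \<longrightarrow> A \<in> N \<longrightarrow> (\<forall>K. \<exists>k\<ge>K. EE k \<in> N))"
      using neg A unfolding T_def V_def EE_def by blast
    then obtain N K where "openin V N" "A \<in> N" "\<forall>k\<ge>K. EE k \<notin> N" by blast
    then show ?thesis by (intro exI[of _ N]) blast
  qed
  have tsT: "topspace T = X" unfolding T_def by (rule ts_X[OF X(1)])
  have closedEE: "closedin T (EE k)" for k unfolding T_def EE_def by (rule closed_pu[OF X Ef])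
  have EE_CL: "EE k \<in> CL T" for k using closedEE Ene unfolding CL_def EE_def by blast
  have inj: "inj EE"
  proof (rule injI)
    fix k k' assume eq: "EE k = EE k'"
    obtain e where e: "e \<in> E k" using Ene by blast
    then have "principal_uf e \<in> EE k'" using eq unfolding EE_def by blast
    then obtain e' where "e' \<in> E k'" "principal_uf e = principal_uf e'" unfolding EE_def by blast
    then have "e \<in> E k'" using pu_inj by metis
    then show "k = k'" using Ed e by blast
  qed
  define h where "h = (\<lambda>C. if C \<in> range EE then real (inv EE C) else 0)"
  have hEE: "h (EE k) = real k" for k unfolding h_def using inv_f_f[OF inj] by simp
  have sing_closed: "\<And>y. y \<in> EE k \<Longrightarrow> closedin T {y}" for k
  proof -
    fix y assume "y \<in> EE k"
    then obtain e where "y = principal_uf e" unfolding EE_def by blast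
    then have "{y} = principal_uf ` {e}" by simp
    then show "closedin T {y}" unfolding T_def using closed_pu[OF X, of "{e}"] by simp
  qed
  have LC: "\<exists>N. openin V N \<and> C \<in> N \<and> (\<forall>D\<in>N. h D = h C)" if C: "C \<in> CL T" for C
  proof (cases "C \<in> range EE")
    case True
    then obtain k where k: "C = EE k" by blast
    define N where "N = \<Inter> (insert {D\<in>CL T. D \<subseteq> EE k} ((\<lambda>e. {D\<in>CL T. D \<inter> {principal_uf e} \<noteq> {}}) ` E k))"
    have oEE: "openin T (EE k)" unfolding T_def EE_def by (rule open_pu[OF X(2) Ef])
    have os: "openin T {principal_uf e}" for e
      using open_pu[OF X(2), of "{e}"] unfolding T_def by simp
    have "openin V N" unfolding N_def V_def
    proof (rule openin_Inter)
      show "finite (insert {D\<in>CL T. D \<subseteq> EE k} ((\<lambda>e. {D\<in>CL T. D \<inter> {principal_uf e} \<noteq> {}}) ` E k))"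
        using Ef by simp
      show "insert {D\<in>CL T. D \<subseteq> EE k} ((\<lambda>e. {D\<in>CL T. D \<inter> {principal_uf e} \<noteq> {}}) ` E k) \<noteq> {}" by simp
      fix S assume "S \<in> insert {D\<in>CL T. D \<subseteq> EE k} ((\<lambda>e. {D\<in>CL T. D \<inter> {principal_uf e} \<noteq> {}}) ` E k)"
      then show "openin (vietoris T) S" using viet_upper[OF oEE] viet_lower[OF os] by blast
    qed
    moreover have "C \<in> N"
    proof -
      have a: "C \<in> {D\<in>CL T. D \<subseteq> EE k}" using k C by simp
      have b: "\<forall>e\<in>E k. C \<in> {D\<in>CL T. D \<inter> {principal_uf e} \<noteq> {}}" using k C by (auto simp: EE_def)
      show ?thesis unfolding N_def using a b by auto
    qed
    moreover have "\<forall>D\<in>N. h D = h C"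
    proof
      fix D assume "D \<in> N"
      then have "D \<subseteq> EE k" "\<forall>e\<in>E k. principal_uf e \<in> D" unfolding N_def by auto
      then have "D = EE k" unfolding EE_def by blast
      then show "h D = h C" using k by simp
    qed
    ultimately show ?thesis by (intro exI[of _ N]) blast
  next
    case False
    obtain N0 K where N0: "openin V N0" "C \<in> N0" "\<And>k. k \<ge> K \<Longrightarrow> EE k \<notin> N0" using H[OF C] by auto
    have "\<forall>k. \<exists>M. openin V M \<and> C \<in> M \<and> EE k \<notin> M"
    proof
      fix k
      have "C \<noteq> EE k" using False by blast
      then show "\<exists>M. openin V M \<and> C \<in> M \<and> EE k \<notin> M"
      proof -
        have cl1: "closedin T (EE k)" by (rule closedEE)
        have cl2: "\<And>y. y \<in> EE k \<Longrightarrow> closedin T {y}" by (rule sing_closed)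
        show ?thesis using sep_lemma[OF C cl1 cl2 \<open>C \<noteq> EE k\<close>] unfolding V_def by simp
      qed
    qed
    then obtain M where M: "\<forall>k. openin V (M k) \<and> C \<in> M k \<and> EE k \<notin> M k" by (rule choice[THEN exE]) 
    then have M: "\<And>k. openin V (M k)" "\<And>k. C \<in> M k" "\<And>k. EE k \<notin> M k" by auto
    define N where "N = \<Inter> (insert N0 (M ` {..<K}))"
    have "openin V N" unfolding N_def using N0(1) M(1) by (intro openin_Inter) auto
    moreover have "C \<in> N" unfolding N_def using N0(2) M(2) by blast
    moreover have "\<forall>D\<in>N. h D = h C"
    proof
      fix D assume D: "D \<in> N"
      have "D \<notin> range EE"
      proof
        assume "D \<in> range EE"
        then obtain k where k: "D = EE k" by blast
        show False
        proof (cases "k < K")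
          case True then show False using D k M(3)[of k] unfolding N_def by blast
        next
          case False then show False using D k N0(3)[of k] unfolding N_def by auto
        qed
      qed
      then show "h D = h C" using \<open>C \<notin> range EE\<close> unfolding h_def by simp
    qed
    ultimately show ?thesis by (intro exI[of _ N]) blast
  qed
  have cont: "continuous_map V euclideanreal h"
    unfolding continuous_map_def
  proof (intro conjI allI impI)
    show "h \<in> topspace V \<rightarrow> topspace euclideanreal" by simp
    fix U :: "real set" assume "openin euclideanreal U"
    show "openin V {x \<in> topspace V. h x \<in> U}"
    proof (subst openin_subopen, intro ballI)
      fix x assume x: "x \<in> {x \<in> topspace V. h x \<in> U}"
      then have xC: "x \<in> CL T" unfolding V_def ts_viet by simp
      have exN: "\<exists>N. openin V N \<and> x \<in> N \<and> (\<forall>D\<in>N. h D = h x)" by (rule LC[OF xC])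
      then obtain N where N0: "openin V N \<and> x \<in> N \<and> (\<forall>D\<in>N. h D = h x)" by (rule exE)
      then have N: "openin V N" "x \<in> N" "\<forall>D\<in>N. h D = h x" by blast+
      have "N \<subseteq> {x \<in> topspace V. h x \<in> U}"
      proof
        fix D assume D: "D \<in> N"
        then have "D \<in> topspace V" using openin_subset[OF N(1)] by blast
        moreover have "h D = h x" using N(3) D by blast
        moreover have "h x \<in> U" using x by blast
        ultimately show "D \<in> {x \<in> topspace V. h x \<in> U}" by simp
      qed
      then show "\<exists>T. openin V T \<and> x \<in> T \<and> T \<subseteq> {x \<in> topspace V. h x \<in> U}" using N by (intro exI[of _ N]) blast
    qed
  qed
  then have "bounded (h ` topspace V)" using ps unfolding pseudocompact_def V_def T_def by simp
  then obtain a where a: "\<forall>x\<in>h ` topspace V. \<bar>x\<bar> \<le> a" unfolding bounded_real by blast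
  define k where "k = nat (ceiling a) + 1"
  have "EE k \<in> topspace V" unfolding V_def ts_viet using EE_CL by blast
  then have "\<bar>h (EE k)\<bar> \<le> a" using a by blast
  then have "real k \<le> a" using hEE by simp
  moreover have "a < real k" unfolding k_def by linarith
  ultimately show False by simp
qed

lemma main_cluster:
  fixes X :: "nat set set set" and g :: "'i \<Rightarrow> nat \<Rightarrow> nat" and Js :: "nat \<Rightarrow> 'i set"
  assumes X: "X \<subseteq> topspace beta_omega" "range principal_uf \<subseteq> X"
    and ps: "pseudocompact (vietoris (subtopology beta_omega X))"
    and fin: "\<And>k. finite (Js k)" and mono: "\<And>k. Js k \<subseteq> Js (Suc k)"
  shows "\<exists>z. (\<forall>i. z i \<in> X) \<and> (\<forall>G C K. finite G \<longrightarrow> (\<forall>i\<in>G. C i \<in> z i) \<longrightarrow>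
            (\<exists>k\<ge>K. \<forall>i\<in>G. (\<exists>n. i \<in> Js n) \<longrightarrow> g i (ms g Js k) \<in> C i))"
proof -
  define T where "T = subtopology beta_omega X"
  define Q where "Q = Qs g Js"
  define m where "m = ms g Js"
  define E where "E = Es g Js"
  define EE where "EE = (\<lambda>k. principal_uf ` E k)"
  have Ef: "\<And>k. finite (E k)" unfolding E_def by (rule Es_finite(1)[where Js=Js and g=g, OF fin])
  have Ene: "\<And>k. E k \<noteq> {}" unfolding E_def by (rule Es_finite(2)[where Js=Js and g=g, OF fin])
  have Ed: "\<And>k k'. k \<noteq> k' \<Longrightarrow> E k \<inter> E k' = {}" unfolding E_def by (rule Es_disj[where Js=Js and g=g, OF fin])
  have "\<exists>A\<in>CL T. \<forall>N. openin (vietoris T) N \<longrightarrow> A \<in> N \<longrightarrow> (\<forall>K. \<exists>k\<ge>K. EE k \<in> N)"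
    using cluster_lemma[OF X ps Ef Ene Ed] unfolding T_def EE_def .
  then obtain A where A: "A \<in> CL T"
    and clA: "\<forall>N. openin (vietoris T) N \<longrightarrow> A \<in> N \<longrightarrow> (\<forall>K. \<exists>k\<ge>K. EE k \<in> N)" by (rule bexE)
  have cl: "\<And>N K. openin (vietoris T) N \<Longrightarrow> A \<in> N \<Longrightarrow> \<exists>k\<ge>K. EE k \<in> N"
    using clA by blast
  have tsT: "topspace T = X" unfolding T_def by (rule ts_X[OF X(1)])
  have AX: "A \<subseteq> X" using A closedin_subset unfolding CL_def tsT[symmetric] by blast
  have Jmono: "\<And>k k'. k \<le> k' \<Longrightarrow> Js k \<subseteq> Js k'"
    using lift_Suc_mono_le[of Js] mono by blast
  have Qanti: "\<And>k k'. k \<le> k' \<Longrightarrow> Q k' \<subseteq> Q k"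
    unfolding Q_def by (rule Qs_anti[where Js=Js and g=g, OF fin])
  have mQ: "\<And>k. m k \<in> Q k" unfolding m_def Q_def using ms_spec[where Js=Js and g=g, OF fin] by blast
  have goodQ: "\<And>k i. i \<in> Js k \<Longrightarrow> good (g i) (Q k)" unfolding Q_def using Qs_props[where Js=Js and g=g, OF fin] by blast

  define Fi where "Fi = (\<lambda>i. \<exists>k. i \<in> Js k \<and> fto (g i) (Q k))"
  define Nf where "Nf = (\<lambda>i. SOME k. i \<in> Js k \<and> fto (g i) (Q k))"
  have Nf: "\<And>i k. Fi i \<Longrightarrow> Nf i \<le> k \<Longrightarrow> i \<in> Js k \<and> fto (g i) (Q k)"
  proof -
    fix i k assume "Fi i" "Nf i \<le> k"
    from \<open>Fi i\<close> have a: "i \<in> Js (Nf i) \<and> fto (g i) (Q (Nf i))" unfolding Fi_def Nf_def by (rule someI_ex)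
    have "i \<in> Js k" using a Jmono[OF \<open>Nf i \<le> k\<close>] by blast
    moreover have "fto (g i) (Q k)" using fto_mono[OF conjunct2[OF a] Qanti[OF \<open>Nf i \<le> k\<close>]] .
    ultimately show "i \<in> Js k \<and> fto (g i) (Q k)" ..
  qed
  have memE: "g i (m k) \<in> E k" if "Fi i" "Nf i \<le> k" for i k
  proof -
    have "i \<in> Js k \<and> fto (g i) (Q k)" using Nf that by blast
    then show ?thesis unfolding m_def E_def Q_def using Es_mem[where i=i and Js=Js and k=k and g=g] by blast
  qed
  define B where "B = (\<lambda>i. (\<lambda>k. g i (m k)) ` {Nf i..})"
  have keyB: "\<And>i k e. Fi i \<Longrightarrow> Nf i \<le> k \<Longrightarrow> e \<in> E k \<Longrightarrow> e \<in> B i \<Longrightarrow> e = g i (m k)"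
  proof -
    fix i k e assume a: "Fi i" "Nf i \<le> k" "e \<in> E k" "e \<in> B i"
    then obtain k' where k': "Nf i \<le> k'" "e = g i (m k')" unfolding B_def by auto
    then have "e \<in> E k'" using memE a(1) by blast
    then have "k' = k" using Ed a(3) by blast
    then show "e = g i (m k)" using k' by simp
  qed
  have nonemp: "A \<inter> bo (B i) \<noteq> {}" if Fi: "Fi i" for i
  proof
    assume empty: "A \<inter> bo (B i) = {}"
    have sub: "A \<subseteq> bo (- B i) \<inter> X"
    proof
      fix a assume a: "a \<in> A"
      then have ua: "nat_ultrafilter a" using AX X_uf[OF X(1)] by blast
      have "B i \<notin> a" using a empty ua unfolding bo_def by blast
      then have "- B i \<in> a" using uf_compl[OF ua] by blast
      then show "a \<in> bo (- B i) \<inter> X" using a AX ua unfolding bo_def by blast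
    qed
    have o: "openin (vietoris T) {D \<in> CL T. D \<subseteq> bo (- B i) \<inter> X}"
      using viet_upper[OF open_sub_bo[where A="- B i" and X=X]] unfolding T_def .
    obtain k where k: "k \<ge> Nf i" "EE k \<in> {D \<in> CL T. D \<subseteq> bo (- B i) \<inter> X}"
      using cl[OF o] A sub by blast
    have "g i (m k) \<in> E k" using memE[OF Fi k(1)] .
    then have "principal_uf (g i (m k)) \<in> bo (- B i)" using k(2) unfolding EE_def by blast
    then have "g i (m k) \<in> - B i" using pu_in_bo by blast
    moreover have "g i (m k) \<in> B i" unfolding B_def using k(1) by auto
    ultimately show False by blast
  qed
  define zF where "zF = (\<lambda>i. SOME a. a \<in> A \<inter> bo (B i))"
  have zF: "\<And>i. Fi i \<Longrightarrow> zF i \<in> A \<inter> bo (B i)"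
    unfolding zF_def using nonemp by (metis ex_in_conv someI_ex)
  define Nc where "Nc = (\<lambda>i. SOME k. i \<in> Js k)"
  define c where "c = (\<lambda>i. SOME c. \<forall>x\<in>Q (Nc i). g i x = c)"
  have cst: "\<And>i k. \<not> Fi i \<Longrightarrow> (\<exists>n. i \<in> Js n) \<Longrightarrow> Nc i \<le> k \<Longrightarrow> g i (m k) = c i"
  proof -
    fix i k assume a: "\<not> Fi i" "\<exists>n. i \<in> Js n" "Nc i \<le> k"
    have iN: "i \<in> Js (Nc i)" unfolding Nc_def using a(2) by (rule someI_ex)
    then have "good (g i) (Q (Nc i))" by (rule goodQ)
    moreover have "\<not> fto (g i) (Q (Nc i))" using a(1) iN unfolding Fi_def by blast
    ultimately have "\<exists>c. \<forall>x\<in>Q (Nc i). g i x = c" unfolding good_def by blast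
    then have "\<forall>x\<in>Q (Nc i). g i x = c i" unfolding c_def by (rule someI_ex)
    moreover have "m k \<in> Q (Nc i)" using mQ[of k] Qanti[OF a(3)] by blast
    ultimately show "g i (m k) = c i" by blast
  qed
  define z where "z = (\<lambda>i. if Fi i then zF i else if (\<exists>n. i \<in> Js n) then principal_uf (c i) else principal_uf 0)"
  define thr where "thr = (\<lambda>i. if Fi i then Nf i else Nc i)"
  have zX: "\<forall>i. z i \<in> X"
  proof
    fix i show "z i \<in> X" unfolding z_def using zF AX X(2) by auto
  qed
  have clus: "\<exists>k\<ge>K. \<forall>i\<in>G. (\<exists>n. i \<in> Js n) \<longrightarrow> g i (ms g Js k) \<in> C i"
    if G: "finite G" and C: "\<forall>i\<in>G. C i \<in> z i" for G C K
  proof -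
    define GF where "GF = {i\<in>G. Fi i}"
    define L where "L = (\<lambda>i. {D \<in> CL T. D \<inter> (bo (C i \<inter> B i) \<inter> X) \<noteq> {}})"
    define N where "N = \<Inter> (insert (CL T) (L ` GF))"
    have oL: "\<And>i. openin (vietoris T) (L i)"
      unfolding L_def using viet_lower[OF open_sub_bo] unfolding T_def by blast
    have oCL: "openin (vietoris T) (CL T)" using openin_topspace[of "vietoris T"] unfolding ts_viet .
    have oN: "openin (vietoris T) N" unfolding N_def
    proof (rule openin_Inter)
      show "finite (insert (CL T) (L ` GF))" using G unfolding GF_def by simp
      show "insert (CL T) (L ` GF) \<noteq> {}" by simp
      fix S assume "S \<in> insert (CL T) (L ` GF)"
      then show "openin (vietoris T) S" using oL oCL by blast
    qed
    have AN: "A \<in> N"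
    proof -
      have "A \<in> L i" if i: "i \<in> GF" for i
      proof -
        have Fi: "Fi i" "i \<in> G" using i unfolding GF_def by auto
        have zi: "z i = zF i" unfolding z_def using Fi by simp
        have za: "zF i \<in> A" "zF i \<in> bo (B i)" using zF[OF Fi(1)] by auto
        have u: "nat_ultrafilter (zF i)" "B i \<in> zF i" using za(2) unfolding bo_def by auto
        have "C i \<in> zF i" using C Fi(2) zi by metis
        then have "C i \<inter> B i \<in> zF i" using uf_Int[OF u(1) _ u(2)] by blast
        then have "zF i \<in> bo (C i \<inter> B i) \<inter> X" using u(1) za(1) AX unfolding bo_def by blast
        then show "A \<in> L i" unfolding L_def using A za(1) by blast
      qed
      then show ?thesis unfolding N_def using A by blast
    qed
    define K' where "K' = K + (\<Sum>i\<in>G. thr i)"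
    obtain k where k: "k \<ge> K'" "EE k \<in> N" using cl[OF oN AN] by blast
    have kthr: "\<And>i. i \<in> G \<Longrightarrow> thr i \<le> k"
    proof -
      fix i assume "i \<in> G"
      then have "thr i \<le> (\<Sum>i\<in>G. thr i)" using member_le_sum[of i G thr] G by simp
      then show "thr i \<le> k" using k(1) unfolding K'_def by linarith
    qed
    have "\<forall>i\<in>G. (\<exists>n. i \<in> Js n) \<longrightarrow> g i (ms g Js k) \<in> C i"
    proof (intro ballI impI)
      fix i assume i: "i \<in> G" "\<exists>n. i \<in> Js n"
      show "g i (ms g Js k) \<in> C i"
      proof (cases "Fi i")
        case True
        then have "i \<in> GF" using i unfolding GF_def by blast
        then have "EE k \<in> L i" using k(2) unfolding N_def by blast
        then obtain y where y: "y \<in> EE k" "y \<in> bo (C i \<inter> B i)" unfolding L_def by blast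
        then obtain e where e: "e \<in> E k" "y = principal_uf e" unfolding EE_def by blast
        then have eCB: "e \<in> C i" "e \<in> B i" using y(2) pu_in_bo by auto
        have "Nf i \<le> k" using kthr[OF i(1)] True unfolding thr_def by simp
        then have "e = g i (m k)" using keyB[OF True _ e(1) eCB(2)] by blast
        then show ?thesis using eCB(1) unfolding m_def by simp
      next
        case False
        have "Nc i \<le> k" using kthr[OF i(1)] False unfolding thr_def by simp
        then have gm: "g i (m k) = c i" using cst[OF False i(2)] by blast
        have "z i = principal_uf (c i)" unfolding z_def using False i(2) by simp
        then have "C i \<in> principal_uf (c i)" using C i(1) by metis
        then have "c i \<in> C i" unfolding principal_uf_def by simp
        then show ?thesis using gm unfolding m_def by simp
      qed
    qed
    moreover have "k \<ge> K" using k(1) unfolding K'_def by simp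
    ultimately show ?thesis by blast
  qed
  show ?thesis using zX clus by blast
qed

theorem corollary4p2:
  fixes X :: "nat set set set" and I :: "'i set"
  assumes "X \<subseteq> topspace beta_omega"
    and "range principal_uf \<subseteq> X"
    and "pseudocompact (vietoris (subtopology beta_omega X))"
  shows "pseudocompact (product_topology (\<lambda>i. subtopology beta_omega X) I)"
  unfolding pseudocompact_def
proof (intro allI impI)
  note X = assms(1,2)
  define T where "T = subtopology beta_omega X"
  define P where "P = product_topology (\<lambda>i. T) I"
  have tsT: "topspace T = X" unfolding T_def by (rule ts_X[OF X(1)])
  have tsP: "topspace P = (\<Pi>\<^sub>E i\<in>I. X)" unfolding P_def by (simp add: tsT)
  fix f :: "('i \<Rightarrow> nat set set) \<Rightarrow> real"
  assume "continuous_map (product_topology (\<lambda>i. subtopology beta_omega X) I) euclideanreal f"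
  then have f: "continuous_map P euclideanreal f" unfolding P_def T_def .
  show "bounded (f ` topspace (product_topology (\<lambda>i. subtopology beta_omega X) I))"
    unfolding P_def[symmetric] T_def[symmetric]
  proof (rule ccontr)
    assume nb: "\<not> bounded (f ` topspace P)"
    have ex: "\<exists>y\<in>topspace P. real n < \<bar>f y\<bar>" for n :: nat
    proof (rule ccontr)
      assume "\<not> (\<exists>y\<in>topspace P. real n < \<bar>f y\<bar>)"
      then have "\<forall>x\<in>f ` topspace P. \<bar>x\<bar> \<le> real n" by auto
      then have "bounded (f ` topspace P)" unfolding bounded_real by blast
      then show False using nb by simp
    qed
    define Op where "Op = (\<lambda>n::nat. {y \<in> topspace P. f y \<in> {r. real n < \<bar>r\<bar>}})"
    have oO: "openin P (Op n)" for n
    proof -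
      have "open {r::real. real n < \<bar>r\<bar>}" by (intro open_Collect_less continuous_intros)
      then have "openin euclideanreal {r::real. real n < \<bar>r\<bar>}" by simp
      then show ?thesis unfolding Op_def by (rule openin_continuous_map_preimage[OF f])
    qed
    have "\<forall>n. \<exists>U. finite {i \<in> I. U i \<noteq> X} \<and> (\<forall>i\<in>I. openin T (U i) \<and> U i \<noteq> {}) \<and> Pi\<^sub>E I U \<subseteq> Op n"
    proof
      fix n
      obtain y where y: "y \<in> topspace P" "real n < \<bar>f y\<bar>" using ex[of n] by blast
      then have yO: "y \<in> Op n" unfolding Op_def by simp
      have "openin (product_topology (\<lambda>i. T) I) (Op n)" using oO[of n] unfolding P_def .
      then have "\<forall>x\<in>Op n. \<exists>U. finite {i \<in> I. U i \<noteq> topspace T} \<and> (\<forall>i\<in>I. openin T (U i)) \<and> x \<in> Pi\<^sub>E I U \<and> Pi\<^sub>E I U \<subseteq> Op n"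
        by (simp only: openin_product_topology_alt)
      then have "\<exists>U. finite {i \<in> I. U i \<noteq> topspace T} \<and> (\<forall>i\<in>I. openin T (U i)) \<and> y \<in> Pi\<^sub>E I U \<and> Pi\<^sub>E I U \<subseteq> Op n"
        using yO by (rule bspec)
      then obtain U where UU: "finite {i \<in> I. U i \<noteq> topspace T} \<and> (\<forall>i\<in>I. openin T (U i)) \<and> y \<in> Pi\<^sub>E I U \<and> Pi\<^sub>E I U \<subseteq> Op n"
        by (rule exE)
      then have U: "finite {i \<in> I. U i \<noteq> topspace T}" "\<forall>i\<in>I. openin T (U i)" "y \<in> Pi\<^sub>E I U" "Pi\<^sub>E I U \<subseteq> Op n"
        by blast+
      have "\<forall>i\<in>I. openin T (U i) \<and> U i \<noteq> {}" using U(2,3) by (auto simp: PiE_iff)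
      then show "\<exists>U. finite {i \<in> I. U i \<noteq> X} \<and> (\<forall>i\<in>I. openin T (U i) \<and> U i \<noteq> {}) \<and> Pi\<^sub>E I U \<subseteq> Op n"
        using U(1,4) unfolding tsT by (intro exI[of _ U]) blast
    qed
    then obtain U where U: "\<forall>n. finite {i \<in> I. U n i \<noteq> X} \<and> (\<forall>i\<in>I. openin T (U n i) \<and> U n i \<noteq> {}) \<and> Pi\<^sub>E I (U n) \<subseteq> Op n"
      by (rule choice[THEN exE])
    have "\<forall>n i. \<exists>k. i \<in> I \<longrightarrow> principal_uf k \<in> U n i"
    proof (intro allI)
      fix n i
      show "\<exists>k. i \<in> I \<longrightarrow> principal_uf k \<in> U n i"
      proof (cases "i \<in> I")
        case True
        then have oi: "openin T (U n i)" "U n i \<noteq> {}" using U by blast+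
        then obtain x where x: "x \<in> U n i" by blast
        obtain A where A: "A \<in> x" "bo A \<inter> X \<subseteq> U n i" using open_sub_nbhd[OF oi(1)[unfolded T_def] x] by blast
        have "x \<in> X" using x openin_subset[OF oi(1)] tsT by blast
        then have "nat_ultrafilter x" using X_uf[OF X(1)] by blast
        then have "A \<noteq> {}" using A(1) uf_empty by blast
        then obtain k where "k \<in> A" by blast
        then have "principal_uf k \<in> bo A \<inter> X" using pu_in_bo X(2) by blast
        then show ?thesis using A(2) by blast
      qed simp
    qed
    then obtain kk where kk: "\<forall>n i. i \<in> I \<longrightarrow> principal_uf (kk n i) \<in> U n i"
      by (metis (mono_tags))
    define Fn where "Fn = (\<lambda>n. {i \<in> I. U n i \<noteq> X})"
    define Js where "Js = (\<lambda>k. \<Union> (Fn ` {..k}))"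
    define g where "g = (\<lambda>i n. kk n i)"
    have finJ: "\<And>k. finite (Js k)" unfolding Js_def Fn_def using U by simp
    have monoJ: "\<And>k. Js k \<subseteq> Js (Suc k)" unfolding Js_def by (intro Union_mono image_mono) auto
    obtain z where zz: "(\<forall>i. z i \<in> X) \<and> (\<forall>G C K. finite G \<longrightarrow> (\<forall>i\<in>G. C i \<in> z i) \<longrightarrow>
            (\<exists>k\<ge>K. \<forall>i\<in>G. (\<exists>n. i \<in> Js n) \<longrightarrow> g i (ms g Js k) \<in> C i))"
      using main_cluster[where Js=Js and g=g, OF X assms(3) finJ monoJ] by (rule exE)
    have zX: "\<forall>i. z i \<in> X" using zz by blast
    have clus: "\<forall>G C K. finite G \<longrightarrow> (\<forall>i\<in>G. C i \<in> z i) \<longrightarrow>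
            (\<exists>k\<ge>K. \<forall>i\<in>G. (\<exists>n. i \<in> Js n) \<longrightarrow> g i (ms g Js k) \<in> C i)" using zz by blast
    define z' where "z' = restrict z I"
    have z'P: "z' \<in> topspace P" unfolding tsP z'_def using zX by auto
    define Ob where "Ob = {y \<in> topspace P. f y \<in> {r. \<bar>r - f z'\<bar> < 1}}"
    have oOb: "openin P Ob"
    proof -
      have "open {r::real. \<bar>r - f z'\<bar> < 1}" by (intro open_Collect_less continuous_intros)
      then have "openin euclideanreal {r::real. \<bar>r - f z'\<bar> < 1}" by simp
      then show ?thesis unfolding Ob_def by (rule openin_continuous_map_preimage[OF f])
    qed
    have zOb: "z' \<in> Ob" unfolding Ob_def using z'P by simp
    have "openin (product_topology (\<lambda>i. T) I) Ob" using oOb unfolding P_def .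
    then have "\<forall>x\<in>Ob. \<exists>U. finite {i \<in> I. U i \<noteq> topspace T} \<and> (\<forall>i\<in>I. openin T (U i)) \<and> x \<in> Pi\<^sub>E I U \<and> Pi\<^sub>E I U \<subseteq> Ob"
      by (simp only: openin_product_topology_alt)
    then have "\<exists>U. finite {i \<in> I. U i \<noteq> topspace T} \<and> (\<forall>i\<in>I. openin T (U i)) \<and> z' \<in> Pi\<^sub>E I U \<and> Pi\<^sub>E I U \<subseteq> Ob"
      using zOb by (rule bspec)
    then obtain W where WW: "finite {i \<in> I. W i \<noteq> topspace T} \<and> (\<forall>i\<in>I. openin T (W i)) \<and> z' \<in> Pi\<^sub>E I W \<and> Pi\<^sub>E I W \<subseteq> Ob"
      by (rule exE)
    then have W: "finite {i \<in> I. W i \<noteq> topspace T}" "\<forall>i\<in>I. openin T (W i)" "z' \<in> Pi\<^sub>E I W" "Pi\<^sub>E I W \<subseteq> Ob"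
      by blast+
    define G where "G = {i \<in> I. W i \<noteq> X}"
    have finG: "finite G" using W(1) unfolding G_def tsT .
    have "\<forall>i. \<exists>C. i \<in> G \<longrightarrow> C \<in> z i \<and> bo C \<inter> X \<subseteq> W i"
    proof
      fix i
      show "\<exists>C. i \<in> G \<longrightarrow> C \<in> z i \<and> bo C \<inter> X \<subseteq> W i"
      proof (cases "i \<in> G")
        case True
        then have iI: "i \<in> I" unfolding G_def by blast
        then have "z i \<in> W i" using W(3) unfolding z'_def by (auto simp: PiE_iff)
        then obtain C where "C \<in> z i" "bo C \<inter> X \<subseteq> W i"
          using open_sub_nbhd[OF W(2)[rule_format, OF iI, unfolded T_def]] by blast
        then show ?thesis by blast
      qed simp
    qed
    then obtain C where C: "\<forall>i. i \<in> G \<longrightarrow> C i \<in> z i \<and> bo (C i) \<inter> X \<subseteq> W i"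
      by (rule choice[THEN exE])
    define K where "K = nat (ceiling \<bar>f z'\<bar>) + 2"
    have "\<forall>i\<in>G. C i \<in> z i" using C by blast
    then obtain k where k: "k \<ge> K" "\<forall>i\<in>G. (\<exists>n. i \<in> Js n) \<longrightarrow> g i (ms g Js k) \<in> C i"
      using clus finG by blast
    define n where "n = ms g Js k"
    have kn: "k \<le> n" unfolding n_def using ms_spec[where Js=Js and g=g and k=k, OF finJ] by blast
    define y where "y = restrict (\<lambda>i. if i \<in> Fn n then principal_uf (kk n i) else z i) I"
    have yU: "y \<in> Pi\<^sub>E I (U n)"
    proof -
      have "y i \<in> U n i" if i: "i \<in> I" for i
      proof (cases "i \<in> Fn n")
        case True
        then show ?thesis using kk i unfolding y_def by simp
      next
        case False
        then have "U n i = X" using i unfolding Fn_def by blast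
        then show ?thesis using zX i False unfolding y_def by simp
      qed
      then show ?thesis unfolding y_def by (auto simp: PiE_iff)
    qed
    then have "y \<in> Op n" using U by blast
    then have fy: "real n < \<bar>f y\<bar>" unfolding Op_def by simp
    have yW: "y \<in> Pi\<^sub>E I W"
    proof -
      have "y i \<in> W i" if i: "i \<in> I" for i
      proof (cases "i \<in> G")
        case True
        show ?thesis
        proof (cases "i \<in> Fn n")
          case True2: True
          then have "i \<in> Js n" unfolding Js_def by blast
          then have "g i n \<in> C i" using k(2) True unfolding n_def by blast
          then have "principal_uf (kk n i) \<in> bo (C i) \<inter> X" using pu_in_bo X(2) unfolding g_def by blast
          then show ?thesis using C True True2 i unfolding y_def by auto
        next
          case False
          have "z' i \<in> W i" using W(3) i by (auto simp: PiE_iff)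
          then show ?thesis using False i unfolding y_def z'_def by simp
        qed
      next
        case False
        then have "W i = X" using i unfolding G_def by blast
        then show ?thesis using zX i X(2) unfolding y_def by auto
      qed
      then show ?thesis unfolding y_def by (auto simp: PiE_iff)
    qed
    then have "y \<in> Ob" using W(4) by blast
    then have "\<bar>f y - f z'\<bar> < 1" unfolding Ob_def by simp
    moreover have "\<bar>f z'\<bar> \<le> real (nat (ceiling \<bar>f z'\<bar>))" by linarith
    moreover have "real K \<le> real n" using k(1) kn by simp
    ultimately show False using fy unfolding K_def by linarith
  qed
qed

end
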